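(* Let $\varepsilon>0$, $\kappa\ge 0$, $\alpha\ge0$, $p,q\in[1,\infty]$, and let training points $(\boldsymbol x^i,y^i)\in\mathbb{R}^n\times\{-1,+1\}$, $i\in[N]$, be given. Then the optimal value of $$\inf_{\boldsymbol\beta\in\mathbb{R}^n}\ \sup_{\mathbb{Q}\in\mathfrak B_\varepsilon(\mathbb{P}_N)}\ \mathbb{E}_{\mathbb{Q}}\Big[\sup_{\boldsymbol z:\|\boldsymbol z\|_p\le\alpha}\ell_{\boldsymbol\beta}(\boldsymbol x+\boldsymbol z,y)\Big]\qquad\text{(DR-ARO)}$$ equals the optimal value of the convex program $$\inf_{\boldsymbol\beta,\lambda,\boldsymbol s}\ \varepsilon\lambda+\frac1N\sum_{i=1}^N s_i\quad\text{s.t.}\quad \ell^\alpha_{\boldsymbol\beta}(\boldsymbol x^i,y^i)\le s_i,\ \ \ell^\alpha_{\boldsymbol\beta}(\boldsymbol x^i,-y^i)-\lambda\kappa\le s_i\ \ \forall i\in[N],\quad \|\boldsymbol\beta\|_{q^\star}\le\lambda,\quad \boldsymbol\beta\in\mathbb{R}^n,\ \lambda\ge0,\ \boldsymbol s\in\mathbb{R}^N_+,$$ and for each fixed $\boldsymbol\beta$ the inner worst-case expectation of DR-ARO equals the infimum of this program over $(\lambda,\boldsymbol s)$ with $\boldsymbol\beta$ fixed.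
   Context: $p^\star,q^\star$ denote dual exponents: $1/p+1/p^\star=1$, $1/q+1/q^\star=1$. Logloss $\ell_{\boldsymbol\beta}(\boldsymbol x,y)=\log(1+\exp(-y\boldsymbol\beta^\top\boldsymbol x))$; adversarial loss $\ell^\alpha_{\boldsymbol\beta}(\boldsymbol x,y)=\log(1+\exp(-y\boldsymbol\beta^\top\boldsymbol x+\alpha\|\boldsymbol\beta\|_{p^\star}))$. $\Xi=\mathbb{R}^n\times\{-1,+1\}$ with metric $d((\boldsymbol x,y),(\boldsymbol x',y'))=\|\boldsymbol x-\boldsymbol x'\|_q+\kappa\mathbb 1[y\ne y']$; $\mathrm W$ is the type-1 Wasserstein distance on Borel probability measures on $\Xi$ (finite first moment) induced by $d$, i.e. $\mathrm W(\mathbb{Q},\mathbb{Q}')=\inf_{\Pi\in\mathcal C(\mathbb{Q},\mathbb{Q}')}\int d\,d\Pi$ over couplings; $\mathfrak B_\varepsilon(\mathbb{P})=\{\mathbb{Q}:\mathrm W(\mathbb{Q},\mathbb{P})\le\varepsilon\}$; $\mathbb{P}_N=\frac1N\sum_i\delta_{(\boldsymbol x^i,y^i)}$. *)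

theory Defs
  imports "HOL-Analysis.Analysis" "HOL-Probability.Probability"
begin

text \<open>Labels y in {-1,+1} are represented by bool: True = +1, False = -1.\<close>
definition lab :: "bool \<Rightarrow> real" where
  "lab y = (if y then 1 else -1)"

definition pnorm :: "ereal \<Rightarrow> real ^ 'n::finite \<Rightarrow> real" where
  "pnorm p x = (if p = \<infinity> then Max (range (\<lambda>i. \<bar>x $ i\<bar>))
                else (\<Sum>i\<in>UNIV. \<bar>x $ i\<bar> powr real_of_ereal p) powr (1 / real_of_ereal p))"

definition dual_exp :: "ereal \<Rightarrow> ereal" where
  "dual_exp p = (if p = 1 then \<infinity> else if p = \<infinity> then 1
                 else ereal (real_of_ereal p / (real_of_ereal p - 1)))"

definition logloss :: "real ^ 'n::finite \<Rightarrow> real ^ 'n \<Rightarrow> bool \<Rightarrow> real" where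
  "logloss \<beta> x y = ln (1 + exp (- lab y * (\<beta> \<bullet> x)))"

definition advloss :: "ereal \<Rightarrow> real \<Rightarrow> real ^ 'n::finite \<Rightarrow> real ^ 'n \<Rightarrow> bool \<Rightarrow> real" where
  "advloss p \<alpha> \<beta> x y = ln (1 + exp (- lab y * (\<beta> \<bullet> x) + \<alpha> * pnorm (dual_exp p) \<beta>))"

definition xi_dist :: "ereal \<Rightarrow> real \<Rightarrow> ((real ^ 'n::finite) \<times> bool) \<Rightarrow> ((real ^ 'n) \<times> bool) \<Rightarrow> real" where
  "xi_dist q \<kappa> \<xi> \<xi>' = pnorm q (fst \<xi> - fst \<xi>') + \<kappa> * (if snd \<xi> \<noteq> snd \<xi>' then 1 else 0)"

definition prob_Xi :: "ereal \<Rightarrow> real \<Rightarrow> ((real ^ 'n::finite) \<times> bool) measure set" where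
  "prob_Xi q \<kappa> = {Q. sets Q = sets borel \<and> prob_space Q \<and>
      (\<integral>\<^sup>+ \<xi>. ennreal (xi_dist q \<kappa> \<xi> (0, True)) \<partial>Q) < \<infinity>}"

definition couplings ::
  "('a::topological_space) measure \<Rightarrow> 'a measure \<Rightarrow> ('a \<times> 'a) measure set" where
  "couplings Q Q' = {C. sets C = sets borel \<and> prob_space C \<and>
      distr C borel fst = Q \<and> distr C borel snd = Q'}"

definition wass :: "ereal \<Rightarrow> real \<Rightarrow> ((real ^ 'n::finite) \<times> bool) measure \<Rightarrow> ((real ^ 'n) \<times> bool) measure \<Rightarrow> ennreal" where
  "wass q \<kappa> Q Q' = (INF C\<in>couplings Q Q'. \<integral>\<^sup>+ z. ennreal (xi_dist q \<kappa> (fst z) (snd z)) \<partial>C)"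

definition empirical :: "nat \<Rightarrow> (nat \<Rightarrow> real ^ 'n::finite) \<Rightarrow> (nat \<Rightarrow> bool) \<Rightarrow> ((real ^ 'n) \<times> bool) measure" where
  "empirical N X Y = measure_of UNIV (sets borel)
      (\<lambda>A. ennreal (real (card {i. i < N \<and> (X i, Y i) \<in> A}) / real N))"

definition wball :: "ereal \<Rightarrow> real \<Rightarrow> real \<Rightarrow> ((real ^ 'n::finite) \<times> bool) measure \<Rightarrow> ((real ^ 'n) \<times> bool) measure set" where
  "wball q \<kappa> \<epsilon> P = {Q \<in> prob_Xi q \<kappa>. wass q \<kappa> Q P \<le> ennreal \<epsilon>}"

definition worst_loss :: "ereal \<Rightarrow> real \<Rightarrow> real ^ 'n::finite \<Rightarrow> ((real ^ 'n) \<times> bool) \<Rightarrow> ennreal" where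
  "worst_loss p \<alpha> \<beta> \<xi> = (SUP z\<in>{z. pnorm p z \<le> \<alpha>}. ennreal (logloss \<beta> (fst \<xi> + z) (snd \<xi>)))"

definition dr_aro_inner :: "real \<Rightarrow> real \<Rightarrow> real \<Rightarrow> ereal \<Rightarrow> ereal \<Rightarrow> nat \<Rightarrow>
    (nat \<Rightarrow> real ^ 'n::finite) \<Rightarrow> (nat \<Rightarrow> bool) \<Rightarrow> real ^ 'n \<Rightarrow> ennreal" where
  "dr_aro_inner \<epsilon> \<kappa> \<alpha> p q N X Y \<beta> =
     (SUP Q\<in>wball q \<kappa> \<epsilon> (empirical N X Y). \<integral>\<^sup>+ \<xi>. worst_loss p \<alpha> \<beta> \<xi> \<partial>Q)"

definition prog_feasible :: "real \<Rightarrow> real \<Rightarrow> ereal \<Rightarrow> ereal \<Rightarrow> nat \<Rightarrow>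
    (nat \<Rightarrow> real ^ 'n::finite) \<Rightarrow> (nat \<Rightarrow> bool) \<Rightarrow> real ^ 'n \<Rightarrow> real \<Rightarrow> (nat \<Rightarrow> real) \<Rightarrow> bool" where
  "prog_feasible \<kappa> \<alpha> p q N X Y \<beta> lam s \<longleftrightarrow>
     (\<forall>i<N. advloss p \<alpha> \<beta> (X i) (Y i) \<le> s i \<and>
            advloss p \<alpha> \<beta> (X i) (\<not> Y i) - lam * \<kappa> \<le> s i \<and> 0 \<le> s i) \<and>
     pnorm (dual_exp q) \<beta> \<le> lam \<and> 0 \<le> lam"

definition prog_obj :: "real \<Rightarrow> nat \<Rightarrow> real \<Rightarrow> (nat \<Rightarrow> real) \<Rightarrow> real" where
  "prog_obj \<epsilon> N lam s = \<epsilon> * lam + (1 / real N) * (\<Sum>i<N. s i)"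

end

theory Submission
  imports Defs
begin

lemma inner_vec_sum: "(a::real^'n) \<bullet> b = (\<Sum>i\<in>UNIV. a$i * b$i)"
  by (simp add: inner_vec_def)

lemma pnorm_one: "pnorm 1 (x::real^'n) = (\<Sum>i\<in>UNIV. \<bar>x $ i\<bar>)"
  unfolding pnorm_def by (simp add: sum_nonneg)

lemma pnorm_inf: "pnorm \<infinity> (x::real^'n) = Max (range (\<lambda>i. \<bar>x $ i\<bar>))"
  unfolding pnorm_def by simp

lemma pnorm_fin: "pnorm (ereal r) (x::real^'n) = (\<Sum>i\<in>UNIV. \<bar>x $ i\<bar> powr r) powr (1/r)"
  unfolding pnorm_def by simp

lemma ereal_cases_ge1:
  assumes "1 \<le> (r::ereal)"
  obtains "r = 1" | "r = \<infinity>" | R where "r = ereal R" "R > 1"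
proof (cases r)
  case (real R)
  then show ?thesis using assms that by (cases "R = 1") (auto simp: one_ereal_def)
qed (use assms that in auto)

lemma dual_fin: "R > 1 \<Longrightarrow> dual_exp (ereal R) = ereal (R/(R-1))"
  by (auto simp: dual_exp_def one_ereal_def)

lemma max_abs_ge: "\<bar>(x::real^'n) $ i\<bar> \<le> Max (range (\<lambda>i. \<bar>x $ i\<bar>))"
  by (rule Max_ge) auto

lemma pnorm_nonneg: "0 \<le> pnorm p (x::real^'n)"
proof -
  have "0 \<le> Max (range (\<lambda>i. \<bar>x $ i\<bar>))" using max_abs_ge[of x undefined] abs_ge_zero order_trans by blast
  then show ?thesis by (simp add: pnorm_def)
qed

lemma holder_sum:
  fixes a b :: "'i \<Rightarrow> real" and P Q :: real
  assumes fin: "finite I" and P: "P > 1" and Q: "Q > 1" and PQ: "1/P + 1/Q = 1"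
  shows "\<bar>\<Sum>i\<in>I. a i * b i\<bar> \<le> (\<Sum>i\<in>I. \<bar>a i\<bar> powr P) powr (1/P) * (\<Sum>i\<in>I. \<bar>b i\<bar> powr Q) powr (1/Q)"
proof -
  define SA where "SA = (\<Sum>i\<in>I. \<bar>a i\<bar> powr P)"
  define SB where "SB = (\<Sum>i\<in>I. \<bar>b i\<bar> powr Q)"
  define A where "A = SA powr (1/P)"
  define B where "B = SB powr (1/Q)"
  have SA0: "SA \<ge> 0" "SB \<ge> 0" unfolding SA_def SB_def by (auto intro: sum_nonneg)
  have "\<bar>\<Sum>i\<in>I. a i * b i\<bar> \<le> (\<Sum>i\<in>I. \<bar>a i\<bar> * \<bar>b i\<bar>)"
    using sum_abs[of "\<lambda>i. a i * b i" I] by (simp add: abs_mult)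
  show ?thesis
  proof (cases "SA = 0 \<or> SB = 0")
    case True
    then have "(\<forall>i\<in>I. a i = 0) \<or> (\<forall>i\<in>I. b i = 0)"
      unfolding SA_def SB_def using fin by (auto simp: sum_nonneg_eq_0_iff)
    then have "(\<Sum>i\<in>I. a i * b i) = 0" by auto
    then show ?thesis using SA0 unfolding SA_def[symmetric] SB_def[symmetric] by simp
  next
    case False
    then have Ap: "A > 0" "B > 0" using SA0 unfolding A_def B_def by auto
    have AP: "A powr P = SA" unfolding A_def using SA0 P by (simp add: powr_powr)
    have BQ: "B powr Q = SB" unfolding B_def using SA0 Q by (simp add: powr_powr)
    have "(\<Sum>i\<in>I. (\<bar>a i\<bar>/A) * (\<bar>b i\<bar>/B)) \<le> (\<Sum>i\<in>I. (\<bar>a i\<bar>/A) powr P / P + (\<bar>b i\<bar>/B) powr Q / Q)"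
      by (intro sum_mono Youngs_inequality[OF P Q PQ]) (use Ap in auto)
    also have "\<dots> = (\<Sum>i\<in>I. \<bar>a i\<bar> powr P) / A powr P / P + (\<Sum>i\<in>I. \<bar>b i\<bar> powr Q) / B powr Q / Q"
      using Ap by (simp add: powr_divide sum.distrib sum_divide_distrib)
    also have "\<dots> = 1" using AP BQ False PQ unfolding SA_def[symmetric] SB_def[symmetric] by simp
    finally have "(\<Sum>i\<in>I. \<bar>a i\<bar> * \<bar>b i\<bar>) / (A * B) \<le> 1"
      by (simp add: sum_divide_distrib)
    then have "(\<Sum>i\<in>I. \<bar>a i\<bar> * \<bar>b i\<bar>) \<le> A * B" using Ap by (simp add: divide_le_eq)
    with \<open>\<bar>\<Sum>i\<in>I. a i * b i\<bar> \<le> _\<close> show ?thesis unfolding A_def B_def SA_def SB_def by linarith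
  qed
qed

lemma sum_abs_mult_le: "\<bar>\<Sum>i\<in>I. (a i::real) * b i\<bar> \<le> (\<Sum>i\<in>I. \<bar>a i\<bar> * \<bar>b i\<bar>)"
  using sum_abs[of "\<lambda>i. a i * b i" I] by (simp add: abs_mult)

lemma holder_pnorm:
  assumes "1 \<le> r"
  shows "\<bar>(\<beta>::real^'n) \<bullet> x\<bar> \<le> pnorm (dual_exp r) \<beta> * pnorm r x"
  using assms
proof (cases rule: ereal_cases_ge1)
  case 1
  have "\<bar>\<beta> \<bullet> x\<bar> \<le> (\<Sum>i\<in>UNIV. \<bar>\<beta>$i\<bar> * \<bar>x$i\<bar>)" unfolding inner_vec_sum by (rule sum_abs_mult_le)
  also have "\<dots> \<le> (\<Sum>i\<in>UNIV. Max (range (\<lambda>i. \<bar>\<beta> $ i\<bar>)) * \<bar>x$i\<bar>)"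
    by (intro sum_mono mult_right_mono max_abs_ge) auto
  finally show ?thesis using 1 by (simp add: dual_exp_def pnorm_inf pnorm_one sum_distrib_left)
next
  case 2
  have "\<bar>\<beta> \<bullet> x\<bar> \<le> (\<Sum>i\<in>UNIV. \<bar>\<beta>$i\<bar> * \<bar>x$i\<bar>)" unfolding inner_vec_sum by (rule sum_abs_mult_le)
  also have "\<dots> \<le> (\<Sum>i\<in>UNIV. \<bar>\<beta>$i\<bar> * Max (range (\<lambda>i. \<bar>x $ i\<bar>)))"
    by (intro sum_mono mult_left_mono max_abs_ge) auto
  finally show ?thesis using 2 by (simp add: dual_exp_def pnorm_inf pnorm_one sum_distrib_right)
next
  case (3 R)
  have PQ: "1 / (R/(R-1)) + 1/R = 1" using 3 by (simp add: field_simps)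
  have "R/(R-1) > 1" using 3 by simp
  from holder_sum[OF _ this 3(2) PQ, of UNIV "\<lambda>i. \<beta>$i" "\<lambda>i. x$i"]
  show ?thesis using 3 by (simp add: dual_fin pnorm_fin inner_vec_sum)
qed

lemma sgn_mult_self: "sgn (a::real) * a = \<bar>a\<bar>"
  by (simp add: abs_sgn mult.commute)

lemma mult_sgn_self: "(a::real) * sgn a = \<bar>a\<bar>"
  by (cases "a > 0"; cases "a = 0") auto

lemma attain_pnorm:
  assumes "1 \<le> r"
  shows "\<exists>u. pnorm r u \<le> 1 \<and> (\<beta>::real^'n) \<bullet> u = pnorm (dual_exp r) \<beta>"
  using assms
proof (cases rule: ereal_cases_ge1)
  case 1
  have "Max (range (\<lambda>i. \<bar>\<beta> $ i\<bar>)) \<in> range (\<lambda>i. \<bar>\<beta> $ i\<bar>)" by (rule Max_in) auto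
  then obtain k where k: "\<bar>\<beta>$k\<bar> = Max (range (\<lambda>i. \<bar>\<beta> $ i\<bar>))" by (metis imageE)
  define u :: "real^'n" where "u = (\<chi> i. if i = k then sgn (\<beta>$k) else 0)"
  have "pnorm r u = (\<Sum>i\<in>UNIV. if i = k then \<bar>sgn (\<beta>$k)\<bar> else 0)" unfolding 1 pnorm_one u_def
    by (intro sum.cong) auto
  also have "\<dots> = \<bar>sgn (\<beta>$k)\<bar>" by simp
  finally have "pnorm r u = \<bar>sgn (\<beta>$k)\<bar>" .
  moreover have "\<beta> \<bullet> u = \<bar>\<beta>$k\<bar>" unfolding inner_vec_sum u_def
    by (simp add: if_distrib cong: if_cong) (metis sgn_mult_self mult.commute)
  ultimately show ?thesis using 1 k by (intro exI[of _ u]) (auto simp: dual_exp_def pnorm_inf abs_sgn_eq)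
next
  case 2
  define u :: "real^'n" where "u = (\<chi> i. sgn (\<beta>$i))"
  have "pnorm r u \<le> 1" unfolding 2 pnorm_inf u_def
    by (subst Max_le_iff) (auto simp: abs_sgn_eq)
  moreover have "\<beta> \<bullet> u = (\<Sum>i\<in>UNIV. \<bar>\<beta>$i\<bar>)" unfolding inner_vec_sum u_def
    by (simp add: mult_sgn_self)
  ultimately show ?thesis using 2 by (intro exI[of _ u]) (auto simp: dual_exp_def pnorm_one)
next
  case (3 R)
  define Q where "Q = R/(R-1)"
  have Q1: "Q > 1" using 3 by (simp add: Q_def)
  have QR: "(Q - 1) * R = Q" using 3 by (simp add: Q_def field_simps)
  define S where "S = (\<Sum>i\<in>UNIV. \<bar>\<beta>$i\<bar> powr Q)"
  define B where "B = S powr (1/Q)"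
  have dB: "pnorm (dual_exp r) \<beta> = B" using 3 by (simp add: dual_fin pnorm_fin B_def S_def Q_def)
  have S0: "S \<ge> 0" unfolding S_def by (auto intro: sum_nonneg)
  show ?thesis
  proof (cases "S = 0")
    case True
    then have "\<forall>i. \<beta>$i = 0" unfolding S_def by (simp add: sum_nonneg_eq_0_iff)
    then have "\<beta> = 0" by (simp add: vec_eq_iff)
    moreover have "pnorm r (0::real^'n) = 0" using 3 by (simp add: pnorm_fin)
    ultimately show ?thesis using dB True by (intro exI[of _ 0]) (simp add: B_def)
  next
    case False
    then have Sp: "S > 0" using S0 by simp
    then have Bp: "B > 0" by (simp add: B_def)
    have BQ: "B powr Q = S" unfolding B_def using S0 Q1 by (simp add: powr_powr)
    define u :: "real^'n" where "u = (\<chi> i. sgn (\<beta>$i) * \<bar>\<beta>$i\<bar> powr (Q-1) / B powr (Q-1))"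
    have ip: "\<beta>$i * u$i = \<bar>\<beta>$i\<bar> powr Q / B powr (Q-1)" for i
    proof -
      have "\<beta>$i * sgn (\<beta>$i) * \<bar>\<beta>$i\<bar> powr (Q-1) = \<bar>\<beta>$i\<bar> powr Q"
      proof (cases "\<beta>$i = 0")
        case False
        have "\<bar>\<beta>$i\<bar> powr (1 + (Q-1)) = \<bar>\<beta>$i\<bar> powr 1 * \<bar>\<beta>$i\<bar> powr (Q-1)"
          by (rule powr_add)
        then have "\<bar>\<beta>$i\<bar> * \<bar>\<beta>$i\<bar> powr (Q-1) = \<bar>\<beta>$i\<bar> powr Q" by simp
        then show ?thesis by (simp add: mult_sgn_self)
      qed simp
      then show ?thesis unfolding u_def by simp
    qed
    have "\<beta> \<bullet> u = S / B powr (Q-1)" unfolding inner_vec_sum ip S_def by (simp add: sum_divide_distrib)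
    also have "\<dots> = B powr Q / B powr (Q-1)" using BQ by simp
    also have "\<dots> = B" using Bp by (simp add: powr_diff[symmetric])
    finally have ipB: "\<beta> \<bullet> u = B" .
    have uR: "\<bar>u$i\<bar> powr R = \<bar>\<beta>$i\<bar> powr Q / S" for i
    proof -
      have "\<bar>u$i\<bar> = \<bar>\<beta>$i\<bar> powr (Q-1) / B powr (Q-1)"
        unfolding u_def by (cases "\<beta>$i = 0") (auto simp: abs_mult abs_sgn_eq)
      then have "\<bar>u$i\<bar> powr R = (\<bar>\<beta>$i\<bar> powr (Q-1)) powr R / (B powr (Q-1)) powr R"
        by (simp add: powr_divide)
      also have "\<dots> = \<bar>\<beta>$i\<bar> powr Q / B powr Q" by (simp add: powr_powr QR)
      finally show ?thesis using BQ by simp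
    qed
    have "pnorm r u = (\<Sum>i\<in>UNIV. \<bar>\<beta>$i\<bar> powr Q / S) powr (1/R)" using 3 uR by (simp add: pnorm_fin)
    also have "\<dots> = 1" using Sp by (simp add: sum_divide_distrib[symmetric] S_def[symmetric])
    finally show ?thesis using ipB dB by (intro exI[of _ u]) simp
  qed
qed

lemma pnorm_scale_le:
  assumes "1 \<le> r"
  shows "pnorm r (c *\<^sub>R (x::real^'n)) \<le> \<bar>c\<bar> * pnorm r x"
  using assms
proof (cases rule: ereal_cases_ge1)
  case 1 then show ?thesis by (simp add: pnorm_one abs_mult sum_distrib_left)
next
  case 2
  show ?thesis unfolding 2 pnorm_inf
    by (subst Max_le_iff) (auto simp: abs_mult intro!: mult_left_mono max_abs_ge)
next
  case (3 R)
  have "(\<Sum>i\<in>UNIV. \<bar>(c *\<^sub>R x)$i\<bar> powr R) = \<bar>c\<bar> powr R * (\<Sum>i\<in>UNIV. \<bar>x$i\<bar> powr R)"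
    by (simp add: abs_mult powr_mult sum_distrib_left)
  then have "pnorm r (c *\<^sub>R x) = (\<bar>c\<bar> powr R) powr (1/R) * (\<Sum>i\<in>UNIV. \<bar>x$i\<bar> powr R) powr (1/R)"
    using 3 by (simp add: pnorm_fin powr_mult sum_nonneg)
  also have "\<dots> = \<bar>c\<bar> * pnorm r x" using 3 by (simp add: powr_powr pnorm_fin)
  finally show ?thesis by simp
qed

lemma pnorm_zero: "1 \<le> r \<Longrightarrow> pnorm r (0::real^'n) = 0"
  using pnorm_scale_le[of r 0 "0::real^'n"] pnorm_nonneg[of r "0::real^'n"] by simp


lemma lab_cont[continuous_intros]: "continuous_on UNIV f \<Longrightarrow> continuous_on S (\<lambda>x. lab (f x))"
  by (rule continuous_on_subset[of UNIV], rule continuous_on_compose2[of UNIV lab UNIV f]) auto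
lemma pnorm_meas[measurable]: "pnorm p \<in> borel_measurable (borel :: (real^'n) measure)"
  unfolding pnorm_def by measurable
lemma lab_sq: "lab y * lab y = 1" by (simp add: lab_def)
lemma neq_ind: "(if (a::bool) \<noteq> b then 1 else 0) = \<bar>lab a - lab b\<bar> / (2::real)"
  by (simp add: lab_def)
lemma one_exp_ne0: "1 + exp (t::real) \<noteq> 0" by (smt (verit) exp_gt_zero)
lemma advloss_cont: "continuous_on UNIV (\<lambda>\<xi>::(real^'n)\<times>bool. advloss p \<alpha> \<beta> (fst \<xi>) (f (snd \<xi>)))"
  unfolding advloss_def
  by (intro continuous_intros continuous_on_ln continuous_on_compose2[of UNIV f UNIV snd]) (auto simp: one_exp_ne0)
lemma advloss_meas: "(\<lambda>\<xi>::(real^'n)\<times>bool. advloss p \<alpha> \<beta> (fst \<xi>) (f (snd \<xi>))) \<in> borel_measurable borel"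
  by (rule borel_measurable_continuous_onI[OF advloss_cont])
lemma xi_meas: "(\<lambda>z::((real^'n)\<times>bool)\<times>((real^'n)\<times>bool). xi_dist q \<kappa> (fst z) (snd z)) \<in> borel_measurable borel"
proof -
  have 1: "(\<lambda>z::((real^'n)\<times>bool)\<times>((real^'n)\<times>bool). fst (fst z) - fst (snd z)) \<in> borel_measurable borel"
    by (rule borel_measurable_continuous_onI) (intro continuous_intros)
  have 2: "(\<lambda>z::((real^'n)\<times>bool)\<times>((real^'n)\<times>bool). pnorm q (fst (fst z) - fst (snd z))) \<in> borel_measurable borel"
    using measurable_compose[OF 1 pnorm_meas] by (simp add: o_def)
  have 3: "(\<lambda>z::((real^'n)\<times>bool)\<times>((real^'n)\<times>bool). \<kappa> * (\<bar>lab (snd (fst z)) - lab (snd (snd z))\<bar> / 2)) \<in> borel_measurable borel"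
    by (rule borel_measurable_continuous_onI) (intro continuous_intros, auto)
  show ?thesis unfolding xi_dist_def neq_ind using borel_measurable_add[OF 2 3] by simp
qed

definition sp :: "real \<Rightarrow> real" where "sp t = ln (1 + exp t)"

lemma sp_pos: "sp t > 0" unfolding sp_def by (simp add: add_pos_pos)
lemma sp_ge: "t \<le> sp t"
  unfolding sp_def by (smt (verit) exp_gt_zero ln_exp ln_le_cancel_iff)
lemma sp_mono: "s \<le> t \<Longrightarrow> sp s \<le> sp t"
  unfolding sp_def by (simp add: add_pos_pos)
lemma sp_lip: assumes "s \<le> t" shows "sp t \<le> sp s + (t - s)"
proof -
  have "1 + exp t \<le> exp (t - s) * (1 + exp s)"
    using assms by (simp add: algebra_simps exp_diff[symmetric] flip: exp_add)
  then have "ln (1 + exp t) \<le> ln (exp (t - s) * (1 + exp s))"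
    by (simp add: add_pos_pos)
  also have "\<dots> = (t - s) + ln (1 + exp s)" using ln_mult[of "exp (t - s)" "1 + exp s"] one_exp_ne0[of s] by simp
  finally show ?thesis unfolding sp_def by simp
qed

lemma logloss_sp: "logloss \<beta> x y = sp (- lab y * (\<beta> \<bullet> x))" by (simp add: logloss_def sp_def)
lemma advloss_sp: "advloss p \<alpha> \<beta> x y = sp (- lab y * (\<beta> \<bullet> x) + \<alpha> * pnorm (dual_exp p) \<beta>)"
  by (simp add: advloss_def sp_def)

lemma lab_abs: "\<bar>lab y\<bar> = 1" by (simp add: lab_def)

lemma worst_loss_eq:
  assumes p: "1 \<le> p" and a: "\<alpha> \<ge> 0"
  shows "worst_loss p \<alpha> \<beta> \<xi> = ennreal (advloss p \<alpha> \<beta> (fst \<xi>) (snd \<xi>))"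
proof -
  obtain x y where xi: "\<xi> = (x, y)" by (cases \<xi>)
  define b where "b = pnorm (dual_exp p) \<beta>"
  have b0: "b \<ge> 0" unfolding b_def by (rule pnorm_nonneg)
  have le: "logloss \<beta> (x + z) y \<le> advloss p \<alpha> \<beta> x y" if "pnorm p z \<le> \<alpha>" for z
  proof -
    have "- lab y * (\<beta> \<bullet> z) \<le> \<bar>\<beta> \<bullet> z\<bar>" by (simp add: lab_def abs_ge_minus_self abs_ge_self)
    also have "\<dots> \<le> b * pnorm p z" unfolding b_def by (rule holder_pnorm[OF p])
    also have "\<dots> \<le> b * \<alpha>" using that b0 by (simp add: mult_left_mono)
    finally show ?thesis unfolding logloss_sp advloss_sp b_def[symmetric]
      by (intro sp_mono) (simp add: inner_add_right algebra_simps)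
  qed
  obtain u where u: "pnorm p u \<le> 1" "\<beta> \<bullet> u = b" using attain_pnorm[OF p] unfolding b_def by blast
  define z where "z = (\<alpha> * - lab y) *\<^sub>R u"
  have zn: "pnorm p z \<le> \<alpha>"
  proof -
    have "pnorm p z \<le> \<bar>\<alpha> * - lab y\<bar> * pnorm p u" unfolding z_def by (rule pnorm_scale_le[OF p])
    also have "\<dots> = \<alpha> * pnorm p u" using a by (simp add: abs_mult lab_abs)
    also have "\<dots> \<le> \<alpha>" using u a by (simp add: mult_left_le)
    finally show ?thesis .
  qed
  have zv: "logloss \<beta> (x + z) y = advloss p \<alpha> \<beta> x y"
  proof -
    have "- lab y * (\<beta> \<bullet> (x + z)) = - lab y * (\<beta> \<bullet> x) + \<alpha> * (lab y * lab y) * b"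
      unfolding z_def using u by (simp add: inner_add_right algebra_simps)
    then show ?thesis unfolding logloss_sp advloss_sp b_def[symmetric] by (simp add: lab_sq)
  qed
  show ?thesis unfolding worst_loss_def xi
  proof (rule antisym)
    show "(SUP z\<in>{z. pnorm p z \<le> \<alpha>}. ennreal (logloss \<beta> (fst (x, y) + z) (snd (x, y)))) \<le> ennreal (advloss p \<alpha> \<beta> (fst (x, y)) (snd (x, y)))"
      using le by (auto intro!: SUP_least ennreal_leI)
    show "ennreal (advloss p \<alpha> \<beta> (fst (x, y)) (snd (x, y))) \<le> (SUP z\<in>{z. pnorm p z \<le> \<alpha>}. ennreal (logloss \<beta> (fst (x, y) + z) (snd (x, y))))"
      using zn zv by (intro SUP_upper2[of z]) auto
  qed
qed

lemma adv_lip: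
  assumes q: "1 \<le> q"
  shows "advloss p \<alpha> \<beta> x y \<le> advloss p \<alpha> \<beta> x' y + pnorm (dual_exp q) \<beta> * pnorm q (x - x')"
proof -
  define c where "c = \<alpha> * pnorm (dual_exp p) \<beta>"
  define t where "t = - lab y * (\<beta> \<bullet> x) + c"
  define s where "s = - lab y * (\<beta> \<bullet> x') + c"
  have "t - s = - lab y * (\<beta> \<bullet> (x - x'))" unfolding t_def s_def by (simp add: inner_diff_right algebra_simps)
  also have "\<dots> \<le> \<bar>\<beta> \<bullet> (x - x')\<bar>" by (simp add: lab_def abs_ge_minus_self abs_ge_self)
  also have "\<dots> \<le> pnorm (dual_exp q) \<beta> * pnorm q (x - x')" by (rule holder_pnorm[OF q])
  finally have ts: "t - s \<le> pnorm (dual_exp q) \<beta> * pnorm q (x - x')" .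
  have "sp t \<le> sp s + max 0 (t - s)"
  proof (cases "s \<le> t")
    case True then show ?thesis using sp_lip[OF True] by simp
  next
    case False then show ?thesis using sp_mono[of t s] by simp
  qed
  moreover have "0 \<le> pnorm (dual_exp q) \<beta> * pnorm q (x - x')" by (simp add: pnorm_nonneg)
  ultimately show ?thesis unfolding advloss_sp c_def[symmetric] t_def[symmetric] s_def[symmetric] using ts by linarith
qed

definition psi :: "ereal \<Rightarrow> real \<Rightarrow> real ^ 'n::finite \<Rightarrow> real \<Rightarrow> real \<Rightarrow> (real^'n) \<times> bool \<Rightarrow> real" where
  "psi p \<alpha> \<beta> \<kappa> lam \<xi> = max (advloss p \<alpha> \<beta> (fst \<xi>) (snd \<xi>)) (advloss p \<alpha> \<beta> (fst \<xi>) (\<not> snd \<xi>) - lam * \<kappa>)"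

lemma pointwise_bound:
  assumes q: "1 \<le> q" and lam: "pnorm (dual_exp q) \<beta> \<le> lam" and k: "\<kappa> \<ge> 0"
  shows "advloss p \<alpha> \<beta> (fst \<xi>) (snd \<xi>) \<le> psi p \<alpha> \<beta> \<kappa> lam \<xi>' + lam * xi_dist q \<kappa> \<xi> \<xi>'"
proof -
  obtain x y where xi: "\<xi> = (x, y)" by (cases \<xi>)
  obtain x' y' where xi': "\<xi>' = (x', y')" by (cases \<xi>')
  have b0: "0 \<le> pnorm (dual_exp q) \<beta>" by (rule pnorm_nonneg)
  have n0: "0 \<le> pnorm q (x - x')" by (rule pnorm_nonneg)
  have L: "advloss p \<alpha> \<beta> x y \<le> advloss p \<alpha> \<beta> x' y + lam * pnorm q (x - x')"
    using adv_lip[OF q, of p \<alpha> \<beta> x y x'] mult_right_mono[OF lam n0] by linarith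
  show ?thesis
  proof (cases "y = y'")
    case True
    then show ?thesis using L unfolding xi xi' psi_def xi_dist_def by simp
  next
    case False
    then have "y = (\<not> y')" by auto
    then show ?thesis using L unfolding xi xi' psi_def xi_dist_def using False by (simp add: algebra_simps)
  qed
qed


definition bmeas :: "'a pmf \<Rightarrow> ('a::topological_space) measure" where
  "bmeas \<mu> = distr (measure_pmf \<mu>) borel id"

lemma bmeas_sets[simp]: "sets (bmeas \<mu>) = sets borel" by (simp add: bmeas_def)
lemma bmeas_space[simp]: "space (bmeas \<mu>) = UNIV" by (simp add: bmeas_def)
lemma bmeas_prob: "prob_space (bmeas \<mu>)"
  unfolding bmeas_def by (intro prob_space.prob_space_distr measure_pmf.prob_space_axioms) simp

lemma nn_integral_bmeas:
  assumes "f \<in> borel_measurable borel"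
  shows "(\<integral>\<^sup>+x. f x \<partial>bmeas \<mu>) = (\<integral>\<^sup>+x. f x \<partial>measure_pmf \<mu>)"
  unfolding bmeas_def by (subst nn_integral_distr) (simp_all add: assms)

lemma distr_bmeas:
  assumes "g \<in> measurable borel borel"
  shows "distr (bmeas \<mu>) borel g = bmeas (map_pmf g \<mu>)"
proof -
  have "distr (bmeas \<mu>) borel g = distr (measure_pmf \<mu>) borel (g \<circ> id)"
    unfolding bmeas_def by (rule distr_distr[OF assms]) simp
  also have "\<dots> = distr (distr (measure_pmf \<mu>) (count_space UNIV) g) borel id"
    by (subst distr_distr[of id "count_space UNIV"]) auto
  also have "\<dots> = bmeas (map_pmf g \<mu>)" unfolding bmeas_def map_pmf_rep_eq ..
  finally show ?thesis .
qed

definition pN :: "nat \<Rightarrow> (nat \<Rightarrow> real ^ 'n::finite) \<Rightarrow> (nat \<Rightarrow> bool) \<Rightarrow> ((real^'n) \<times> bool) pmf" where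
  "pN N X Y = map_pmf (\<lambda>i. (X i, Y i)) (pmf_of_set {..<N})"

lemma empirical_eq:
  fixes X :: "nat \<Rightarrow> real^'n::finite"
  assumes N: "N > 0"
  shows "empirical N X Y = bmeas (pN N X Y)"
proof -
  have "bmeas (pN N X Y) = measure_of UNIV (sets borel) (emeasure (bmeas (pN N X Y)))"
    using measure_of_of_measure[of "bmeas (pN N X Y)"] by simp
  also have "\<dots> = empirical N X Y" unfolding empirical_def
  proof (rule measure_of_eq)
    fix a assume "a \<in> sigma_sets UNIV (sets (borel :: ((real^'n)\<times>bool) measure))"
    then have a: "a \<in> sets (borel :: ((real^'n)\<times>bool) measure)"
      using sets.sigma_sets_eq[of "borel :: ((real^'n)\<times>bool) measure"] by simp
    have ne: "{..<N} \<noteq> {}" using N by auto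
    have "emeasure (bmeas (pN N X Y)) a = emeasure (measure_pmf (pN N X Y)) a"
      unfolding bmeas_def using a by (subst emeasure_distr) auto
    also have "\<dots> = emeasure (measure_pmf (pmf_of_set {..<N})) ((\<lambda>i. (X i, Y i)) -` a)"
      unfolding pN_def by simp
    also have "\<dots> = ennreal (real (card ({..<N} \<inter> (\<lambda>i. (X i, Y i)) -` a)) / real N)"
      using emeasure_pmf_of_set[OF ne] by simp
    also have "{..<N} \<inter> (\<lambda>i. (X i, Y i)) -` a = {i. i < N \<and> (X i, Y i) \<in> a}" by auto
    finally show "emeasure (bmeas (pN N X Y)) a = ennreal (real (card {i. i < N \<and> (X i, Y i) \<in> a}) / real N)"
      by simp
  qed auto
  finally show ?thesis by simp
qed

lemma nn_integral_empirical:
  fixes X :: "nat \<Rightarrow> real^'n::finite"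
  assumes N: "N > 0" and f: "f \<in> borel_measurable borel"
  shows "(\<integral>\<^sup>+\<xi>. f \<xi> \<partial>empirical N X Y) = (\<Sum>i<N. f (X i, Y i)) / of_nat N"
proof -
  have ne: "{..<N} \<noteq> {}" using N by auto
  show ?thesis unfolding empirical_eq[OF N] nn_integral_bmeas[OF f] pN_def
    using nn_integral_pmf_of_set[OF ne, of "\<lambda>i. f (X i, Y i)"] by simp
qed


lemma fst_meas_borel: "fst \<in> borel_measurable (borel :: ('a::topological_space \<times> 'b::topological_space) measure)"
  by (rule borel_measurable_continuous_onI) (intro continuous_intros)
lemma snd_meas_borel: "snd \<in> borel_measurable (borel :: ('a::topological_space \<times> 'b::topological_space) measure)"
  by (rule borel_measurable_continuous_onI) (intro continuous_intros)

lemma L_meas: "(\<lambda>\<xi>::(real^'n::finite)\<times>bool. advloss p \<alpha> \<beta> (fst \<xi>) (snd \<xi>)) \<in> borel_measurable borel"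
  using advloss_meas[of p \<alpha> \<beta> "\<lambda>x. x"] by simp

lemma psi_meas: "psi p \<alpha> \<beta> \<kappa> lam \<in> borel_measurable (borel :: ((real^'n::finite)\<times>bool) measure)"
proof -
  have 1: "(\<lambda>\<xi>::(real^'n)\<times>bool. advloss p \<alpha> \<beta> (fst \<xi>) (\<not> snd \<xi>) - lam * \<kappa>) \<in> borel_measurable borel"
    using advloss_meas[of p \<alpha> \<beta> Not] by (intro borel_measurable_diff) auto
  show ?thesis unfolding psi_def[abs_def] using borel_measurable_max[OF 1 L_meas[of p \<alpha> \<beta>]] by simp
qed

lemma advloss_pos: "advloss p \<alpha> \<beta> x y > 0" by (simp add: advloss_sp sp_pos)

lemma psi_nonneg: "psi p \<alpha> \<beta> \<kappa> lam \<xi> \<ge> 0"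
  unfolding psi_def using advloss_pos[of p \<alpha> \<beta> "fst \<xi>" "snd \<xi>"] by linarith

lemma upper_bound:
  fixes X :: "nat \<Rightarrow> real^'n::finite"
  assumes p: "1 \<le> p" and q: "1 \<le> q" and a: "\<alpha> \<ge> 0" and k: "\<kappa> \<ge> 0" and N: "N > 0" and e: "\<epsilon> > 0"
    and Q: "Q \<in> wball q \<kappa> \<epsilon> (empirical N X Y)"
    and F: "prog_feasible \<kappa> \<alpha> p q N X Y \<beta> lam s"
  shows "(\<integral>\<^sup>+\<xi>. worst_loss p \<alpha> \<beta> \<xi> \<partial>Q) \<le> ennreal (prog_obj \<epsilon> N lam s)"
proof -
  define L where "L = (\<lambda>\<xi>::(real^'n)\<times>bool. advloss p \<alpha> \<beta> (fst \<xi>) (snd \<xi>))"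
  define \<Psi> where "\<Psi> = psi p \<alpha> \<beta> \<kappa> lam"
  define P where "P = empirical N X Y"
  define d where "d = (\<lambda>z::((real^'n)\<times>bool)\<times>((real^'n)\<times>bool). xi_dist q \<kappa> (fst z) (snd z))"
  have Lm: "L \<in> borel_measurable borel" unfolding L_def by (rule L_meas)
  have Pm: "\<Psi> \<in> borel_measurable borel" unfolding \<Psi>_def by (rule psi_meas)
  have dm: "d \<in> borel_measurable borel" unfolding d_def by (rule xi_meas)
  have d0: "d z \<ge> 0" for z unfolding d_def xi_dist_def using pnorm_nonneg k by auto
  have lamb: "pnorm (dual_exp q) \<beta> \<le> lam" and lam0: "0 \<le> lam" using F by (auto simp: prog_feasible_def)
  have WL: "worst_loss p \<alpha> \<beta> \<xi> = ennreal (L \<xi>)" for \<xi> unfolding L_def by (rule worst_loss_eq[OF p a])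
  define A where "A = (\<Sum>i<N. s i) / real N"
  have PsiA: "(\<integral>\<^sup>+\<xi>. ennreal (\<Psi> \<xi>) \<partial>P) \<le> ennreal A"
  proof -
    have "(\<integral>\<^sup>+\<xi>. ennreal (\<Psi> \<xi>) \<partial>P) = (\<Sum>i<N. ennreal (\<Psi> (X i, Y i))) / of_nat N"
      unfolding P_def by (rule nn_integral_empirical[OF N]) (use Pm in simp)
    also have "\<dots> = ennreal ((\<Sum>i<N. \<Psi> (X i, Y i)) / real N)"
      using N by (simp add: \<Psi>_def psi_nonneg sum_nonneg ennreal_of_nat_eq_real_of_nat divide_ennreal)
    also have "\<dots> \<le> ennreal A"
    proof -
      have "(\<Sum>i<N. \<Psi> (X i, Y i)) \<le> (\<Sum>i<N. s i)"
      proof (rule sum_mono)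
        fix i assume "i \<in> {..<N}"
        then show "\<Psi> (X i, Y i) \<le> s i" using F unfolding \<Psi>_def psi_def prog_feasible_def by auto
      qed
      then show ?thesis unfolding A_def by (intro ennreal_leI divide_right_mono) auto
    qed
    finally show ?thesis .
  qed
  have key: "(\<integral>\<^sup>+\<xi>. ennreal (L \<xi>) \<partial>Q) \<le> ennreal A + ennreal lam * (\<integral>\<^sup>+z. ennreal (d z) \<partial>C)"
    if C: "C \<in> couplings Q P" for C
  proof -
    have sC: "sets C = sets borel" and CQ: "distr C borel fst = Q" and CP: "distr C borel snd = P"
      using C by (auto simp: couplings_def)
    have mC: "measurable C M = measurable borel M" for M :: "'x measure"
      using measurable_cong_sets[OF sC refl] .
    have "(\<integral>\<^sup>+\<xi>. ennreal (L \<xi>) \<partial>Q) = (\<integral>\<^sup>+z. ennreal (L (fst z)) \<partial>C)"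
      unfolding CQ[symmetric] by (rule nn_integral_distr) (auto simp: mC fst_meas_borel Lm measurable_compose[OF Lm measurable_ennreal])
    also have "\<dots> \<le> (\<integral>\<^sup>+z. ennreal (\<Psi> (snd z)) + ennreal lam * ennreal (d z) \<partial>C)"
    proof (rule nn_integral_mono)
      fix z :: "((real^'n)\<times>bool)\<times>((real^'n)\<times>bool)"
      have "L (fst z) \<le> \<Psi> (snd z) + lam * d z"
        unfolding L_def \<Psi>_def d_def by (rule pointwise_bound[OF q lamb k])
      then have "ennreal (L (fst z)) \<le> ennreal (\<Psi> (snd z) + lam * d z)" by (rule ennreal_leI)
      also have "\<dots> = ennreal (\<Psi> (snd z)) + ennreal lam * ennreal (d z)"
        using d0 lam0 by (simp add: \<Psi>_def psi_nonneg ennreal_plus ennreal_mult)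
      finally show "ennreal (L (fst z)) \<le> ennreal (\<Psi> (snd z)) + ennreal lam * ennreal (d z)" .
    qed
    also have "\<dots> = (\<integral>\<^sup>+z. ennreal (\<Psi> (snd z)) \<partial>C) + ennreal lam * (\<integral>\<^sup>+z. ennreal (d z) \<partial>C)"
    proof -
      have m1: "(\<lambda>z. ennreal (\<Psi> (snd z))) \<in> borel_measurable C"
        unfolding mC using measurable_compose[OF measurable_compose[OF snd_meas_borel Pm] measurable_ennreal] by simp
      have m2: "(\<lambda>z. ennreal (d z)) \<in> borel_measurable C"
        unfolding mC using measurable_compose[OF dm measurable_ennreal] by simp
      show ?thesis using m1 m2 by (simp add: nn_integral_add nn_integral_cmult)
    qed
    also have "(\<integral>\<^sup>+z. ennreal (\<Psi> (snd z)) \<partial>C) = (\<integral>\<^sup>+\<xi>. ennreal (\<Psi> \<xi>) \<partial>P)"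
      unfolding CP[symmetric] by (rule nn_integral_distr[symmetric]) (auto simp: mC snd_meas_borel Pm measurable_compose[OF Pm measurable_ennreal])
    finally show ?thesis using add_right_mono[OF PsiA, of "ennreal lam * (\<integral>\<^sup>+z. ennreal (d z) \<partial>C)"] by (rule order_trans)
  qed
  have W: "wass q \<kappa> Q P \<le> ennreal \<epsilon>" using Q unfolding wball_def P_def by auto
  show ?thesis unfolding WL
  proof (rule ennreal_le_epsilon)
    fix e :: real assume e0: "0 < e"
    define \<delta> where "\<delta> = e / (lam + 1)"
    have \<delta>0: "\<delta> > 0" unfolding \<delta>_def using e0 lam0 by simp
    have lamd: "lam * \<delta> \<le> e" unfolding \<delta>_def using e0 lam0 by (simp add: field_simps)
    have "wass q \<kappa> Q P < ennreal (\<epsilon> + \<delta>)"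
    proof -
      have "ennreal \<epsilon> < ennreal (\<epsilon> + \<delta>)" using \<delta>0 e by (intro ennreal_lessI) auto
      with W show ?thesis by (rule le_less_trans)
    qed
    then obtain C where C: "C \<in> couplings Q P" and Cd: "(\<integral>\<^sup>+z. ennreal (d z) \<partial>C) < ennreal (\<epsilon> + \<delta>)"
      unfolding wass_def d_def by (auto simp: INF_less_iff)
    have "(\<integral>\<^sup>+\<xi>. ennreal (L \<xi>) \<partial>Q) \<le> ennreal A + ennreal lam * ennreal (\<epsilon> + \<delta>)"
    proof -
      have "ennreal lam * (\<integral>\<^sup>+z. ennreal (d z) \<partial>C) \<le> ennreal lam * ennreal (\<epsilon> + \<delta>)"
        using Cd by (intro mult_left_mono) auto
      from key[OF C] add_left_mono[OF this, of "ennreal A"] show ?thesis by (rule order_trans)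
    qed
    also have "\<dots> = ennreal (A + lam * \<epsilon> + lam * \<delta>)"
    proof -
      have "0 \<le> (\<Sum>i<N. s i)" using F by (intro sum_nonneg) (auto simp: prog_feasible_def)
      then have A0: "0 \<le> A" unfolding A_def by simp
      have ed: "0 \<le> \<epsilon> + \<delta>" using \<delta>0 \<open>\<epsilon> > 0\<close> by linarith
      have "ennreal lam * ennreal (\<epsilon> + \<delta>) = ennreal (lam * (\<epsilon> + \<delta>))"
        using lam0 ed by (rule ennreal_mult[symmetric])
      moreover have "ennreal A + ennreal (lam * (\<epsilon> + \<delta>)) = ennreal (A + lam * (\<epsilon> + \<delta>))"
      proof -
        have "0 \<le> \<epsilon> + \<delta>" using \<delta>0 \<open>\<epsilon> > 0\<close> by linarith
        then show ?thesis using A0 lam0 by (intro ennreal_plus[symmetric] mult_nonneg_nonneg) auto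
      qed
      moreover have "A + lam * (\<epsilon> + \<delta>) = A + lam * \<epsilon> + lam * \<delta>" by (simp add: distrib_left)
      ultimately show ?thesis by simp
    qed
    also have "\<dots> \<le> ennreal (prog_obj \<epsilon> N lam s + e)"
      using lamd by (intro ennreal_leI) (simp add: prog_obj_def A_def)
    also have "\<dots> = ennreal (prog_obj \<epsilon> N lam s) + ennreal e"
    proof -
      have "0 \<le> (\<Sum>i<N. s i)" using F by (intro sum_nonneg) (auto simp: prog_feasible_def)
      then have "0 \<le> prog_obj \<epsilon> N lam s" using lam0 e unfolding prog_obj_def by simp
      then show ?thesis using e0 by (simp add: ennreal_plus)
    qed
    finally show "(\<integral>\<^sup>+\<xi>. ennreal (L \<xi>) \<partial>Q) \<le> ennreal (prog_obj \<epsilon> N lam s) + ennreal e" .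
  qed
qed


definition Kp :: "real \<Rightarrow> real \<Rightarrow> (bool \<times> bool) pmf" where
  "Kp t m = bernoulli_pmf t \<bind> (\<lambda>f. map_pmf (\<lambda>g. (f, g)) (bernoulli_pmf m))"

definition Kexp :: "real \<Rightarrow> real \<Rightarrow> (bool \<times> bool \<Rightarrow> real) \<Rightarrow> real" where
  "Kexp t m \<phi> = t * (m * \<phi> (True, True) + (1 - m) * \<phi> (True, False))
      + (1 - t) * (m * \<phi> (False, True) + (1 - m) * \<phi> (False, False))"

lemma Kexp_nonneg: "0 \<le> t \<Longrightarrow> t \<le> 1 \<Longrightarrow> 0 \<le> m \<Longrightarrow> m \<le> 1 \<Longrightarrow> (\<And>k. 0 \<le> \<phi> k) \<Longrightarrow> 0 \<le> Kexp t m \<phi>"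
  unfolding Kexp_def by (intro add_nonneg_nonneg mult_nonneg_nonneg) auto

lemma ennreal_lin:
  fixes a b p q :: real
  assumes "0 \<le> a" "0 \<le> b" "0 \<le> p" "0 \<le> q"
  shows "ennreal a * ennreal p + ennreal b * ennreal q = ennreal (p * a + q * b)"
proof -
  have "ennreal (p * a + q * b) = ennreal (p * a) + ennreal (q * b)"
    using assms by (intro ennreal_plus) auto
  also have "\<dots> = ennreal p * ennreal a + ennreal q * ennreal b"
    using assms by (simp add: ennreal_mult)
  finally show ?thesis by (simp add: mult.commute)
qed

lemma Kp_int:
  assumes t: "0 \<le> t" "t \<le> 1" and m: "0 \<le> m" "m \<le> 1" and \<phi>: "\<And>k. 0 \<le> \<phi> k"
  shows "(\<integral>\<^sup>+k. ennreal (\<phi> k) \<partial>Kp t m) = ennreal (Kexp t m \<phi>)"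
proof -
  have inner: "(\<integral>\<^sup>+g. ennreal (\<phi> (f, g)) \<partial>bernoulli_pmf m) = ennreal (m * \<phi> (f, True) + (1 - m) * \<phi> (f, False))" for f
    using m \<phi> by (subst nn_integral_bernoulli_pmf) (auto simp: ennreal_lin)
  have "(\<integral>\<^sup>+k. ennreal (\<phi> k) \<partial>Kp t m) = (\<integral>\<^sup>+f. ennreal (m * \<phi> (f, True) + (1 - m) * \<phi> (f, False)) \<partial>bernoulli_pmf t)"
    unfolding Kp_def by (simp add: inner)
  also have "\<dots> = ennreal (Kexp t m \<phi>)"
  proof -
    define G where "G f = m * \<phi> (f, True) + (1 - m) * \<phi> (f, False)" for f
    have G0: "0 \<le> G f" for f unfolding G_def using m \<phi> by (intro add_nonneg_nonneg mult_nonneg_nonneg) auto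
    have "(\<integral>\<^sup>+f. ennreal (G f) \<partial>bernoulli_pmf t) = ennreal (G True) * ennreal t + ennreal (G False) * ennreal (1 - t)"
      using t G0 by (intro nn_integral_bernoulli_pmf) auto
    also have "\<dots> = ennreal (t * G True + (1 - t) * G False)"
      using t G0 by (intro ennreal_lin) auto
    finally show ?thesis unfolding G_def Kexp_def by simp
  qed
  finally show ?thesis .
qed

definition pC :: "nat \<Rightarrow> (nat \<Rightarrow> bool \<times> bool \<Rightarrow> 'a) \<Rightarrow> (nat \<Rightarrow> real) \<Rightarrow> real \<Rightarrow> 'a pmf" where
  "pC N G t m = pmf_of_set {..<N} \<bind> (\<lambda>i. map_pmf (G i) (Kp (t i) m))"

lemma pC_int:
  assumes N: "N > 0" and t: "\<And>i. 0 \<le> t i" "\<And>i. t i \<le> 1" and m: "0 \<le> m" "m \<le> 1" and h: "\<And>z. 0 \<le> h z"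
  shows "(\<integral>\<^sup>+z. ennreal (h z) \<partial>pC N G t m) = ennreal ((\<Sum>i<N. Kexp (t i) m (\<lambda>k. h (G i k))) / real N)"
proof -
  have ne: "{..<N} \<noteq> {}" using N by auto
  have "(\<integral>\<^sup>+z. ennreal (h z) \<partial>pC N G t m) = (\<integral>\<^sup>+i. ennreal (Kexp (t i) m (\<lambda>k. h (G i k))) \<partial>pmf_of_set {..<N})"
    unfolding pC_def using t m h by (simp add: Kp_int)
  also have "\<dots> = (\<Sum>i<N. ennreal (Kexp (t i) m (\<lambda>k. h (G i k)))) / of_nat N"
    using nn_integral_pmf_of_set[OF ne, of "\<lambda>i. ennreal (Kexp (t i) m (\<lambda>k. h (G i k)))"] by simp
  also have "\<dots> = ennreal ((\<Sum>i<N. Kexp (t i) m (\<lambda>k. h (G i k))) / real N)"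
    using N t m h by (simp add: Kexp_nonneg sum_nonneg ennreal_of_nat_eq_real_of_nat divide_ennreal)
  finally show ?thesis .
qed

lemma pC_snd:
  assumes N: "N > 0" and G: "\<And>i k. snd (G i k) = H i"
  shows "map_pmf snd (pC N G t m) = map_pmf H (pmf_of_set {..<N})"
proof -
  have "map_pmf snd (pC N G t m) = pmf_of_set {..<N} \<bind> (\<lambda>i. map_pmf (snd \<circ> G i) (Kp (t i) m))"
    unfolding pC_def by (simp add: map_bind_pmf pmf.map_comp)
  also have "\<dots> = pmf_of_set {..<N} \<bind> (\<lambda>i. return_pmf (H i))"
  proof -
    have "snd \<circ> G i = (\<lambda>_. H i)" for i using G by (auto simp: fun_eq_iff)
    then show ?thesis by (simp add: map_pmf_const)
  qed
  also have "\<dots> = map_pmf H (pmf_of_set {..<N})" by (simp add: map_pmf_def)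
  finally show ?thesis .
qed

lemma finite_set_pC: assumes N: "N > 0" shows "finite (set_pmf (pC N G t m))"
proof -
  have "set_pmf (pmf_of_set {..<N}) = {..<N}" using N by (intro set_pmf_of_set) auto
  then show ?thesis unfolding pC_def Kp_def
  by (auto simp: set_bind_pmf set_pmf_of_set intro!: finite_UN_I finite_imageI intro: finite_subset[OF subset_UNIV])
qed


lemma lp_select:
  fixes D :: "nat \<Rightarrow> real" and b \<kappa> \<epsilon> :: real and N :: nat
  assumes k: "\<kappa> \<ge> 0" and e: "\<epsilon> > 0" and N: "N > 0"
  shows "\<exists>lam0 t. b \<le> lam0 \<and> (\<forall>i. 0 \<le> t i \<and> t i \<le> 1) \<and>
     (\<forall>i<N. (D i > lam0 * \<kappa> \<longrightarrow> t i = 1) \<and> (D i < lam0 * \<kappa> \<longrightarrow> t i = 0)) \<and>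
     \<kappa> * (\<Sum>i<N. t i) \<le> \<epsilon> * N \<and> (lam0 = b \<or> \<kappa> * (\<Sum>i<N. t i) = \<epsilon> * N)"
proof (cases "\<kappa> = 0")
  case True
  define t where "t i = (if D i > 0 then 1 else 0::real)" for i
  show ?thesis using True e
    by (intro exI[of _ b] exI[of _ t]) (auto simp: t_def)
next
  case False
  then have kp: "\<kappa> > 0" using k by simp
  define c where "c i = D i / \<kappa>" for i
  have cD: "c i < lam \<longleftrightarrow> D i < lam * \<kappa>" "c i > lam \<longleftrightarrow> D i > lam * \<kappa>" "c i = lam \<longleftrightarrow> D i = lam * \<kappa>" for i lam
    unfolding c_def using kp by (auto simp: field_simps)
  define cand where "cand = insert b (c ` {..<N})"
  have fc: "finite cand" unfolding cand_def by simp
  define cnt where "cnt lam = card {i. i < N \<and> D i > lam * \<kappa>}" for lam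
  define T where "T = {lam \<in> cand. b \<le> lam \<and> \<kappa> * cnt lam \<le> \<epsilon> * N}"
  have fT: "finite T" unfolding T_def using fc by simp
  define lamM where "lamM = Max cand"
  have bM: "b \<le> lamM" unfolding lamM_def cand_def by (rule Max_ge) auto
  have cM: "c i \<le> lamM" if "i < N" for i unfolding lamM_def cand_def using that by (intro Max_ge) auto
  have "cnt lamM = 0" unfolding cnt_def using cM cD(2) by (auto simp: not_less[symmetric])
  moreover have "lamM \<in> cand" unfolding lamM_def using fc by (rule Max_in) (simp add: cand_def)
  ultimately have MT: "lamM \<in> T" unfolding T_def using bM e by simp
  define lam0 where "lam0 = Min T"
  have l0T: "lam0 \<in> T" unfolding lam0_def using fT MT by (intro Min_in) auto
  have l0min: "lam0 \<le> lam" if "lam \<in> T" for lam unfolding lam0_def using fT that by simp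
  define A where "A = {i. i < N \<and> D i > lam0 * \<kappa>}"
  define E where "E = {i. i < N \<and> D i = lam0 * \<kappa>}"
  have fA: "finite A" "finite E" unfolding A_def E_def by auto
  have AE: "A \<inter> E = {}" unfolding A_def E_def by auto
  have cA: "\<kappa> * card A \<le> \<epsilon> * N" using l0T unfolding T_def cnt_def A_def by simp
  have bl0: "b \<le> lam0" using l0T unfolding T_def by simp
  show ?thesis
  proof (cases "lam0 = b")
    case True
    define t where "t i = (if i \<in> A then 1 else 0::real)" for i
    have "(\<Sum>i<N. t i) = card A"
    proof -
      have "(\<Sum>i<N. t i) = (\<Sum>i<N. of_bool (i \<in> A))" unfolding t_def by (simp add: of_bool_def)
      also have "\<dots> = card ({..<N} \<inter> {i. i \<in> A})" by simp
      also have "{..<N} \<inter> {i. i \<in> A} = A" unfolding A_def by auto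
      finally show ?thesis .
    qed
    then have "\<kappa> * (\<Sum>i<N. t i) \<le> \<epsilon> * N" using cA by simp
    then show ?thesis using True
      by (intro exI[of _ lam0] exI[of _ t]) (auto simp: t_def A_def)
  next
    case False
    then have bl: "b < lam0" using bl0 by simp
    have "lam0 \<in> c ` {..<N}" using l0T False unfolding T_def cand_def by auto
    then obtain j where j: "j < N" "c j = lam0" by auto
    then have jE: "j \<in> E" unfolding E_def using cD(3) by auto
    then have Epos: "card E > 0" using fA by (auto simp: card_gt_0_iff)
    have big: "\<epsilon> * N \<le> \<kappa> * (card A + card E)"
    proof (rule ccontr)
      assume less: "\<not> ?thesis"
      define S where "S = {lam \<in> cand. lam < lam0}"
      have fS: "finite S" "b \<in> S" unfolding S_def cand_def using fc bl by auto
      define lam' where "lam' = Max S"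
      have l'S: "lam' \<in> S" unfolding lam'_def using fS by (intro Max_in) auto
      have l'max: "lam \<le> lam'" if "lam \<in> S" for lam unfolding lam'_def using fS that by simp
      have bl': "b \<le> lam'" using l'max fS by simp
      have "{i. i < N \<and> D i > lam' * \<kappa>} = A \<union> E"
      proof (intro set_eqI iffI)
        fix i assume i: "i \<in> {i. i < N \<and> D i > lam' * \<kappa>}"
        then have "c i > lam'" "i < N" using cD(2) by auto
        have "\<not> c i < lam0"
        proof
          assume "c i < lam0"
          then have "c i \<in> S" unfolding S_def cand_def using \<open>i < N\<close> by auto
          then show False using l'max \<open>c i > lam'\<close> by fastforce
        qed
        then show "i \<in> A \<union> E" unfolding A_def E_def using \<open>i < N\<close> cD by (auto simp: not_less order.order_iff_strict)
      next
        fix i assume "i \<in> A \<union> E"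
        moreover have "lam' * \<kappa> < lam0 * \<kappa>" using l'S kp unfolding S_def by simp
        ultimately show "i \<in> {i. i < N \<and> D i > lam' * \<kappa>}" unfolding A_def E_def by auto
      qed
      then have "cnt lam' = card A + card E" unfolding cnt_def using fA AE by (simp add: card_Un_disjoint)
      then have "lam' \<in> T" unfolding T_def using l'S bl' less unfolding S_def by auto
      then have "lam0 \<le> lam'" by (rule l0min)
      then show False using l'S unfolding S_def by simp
    qed
    define \<tau> where "\<tau> = (\<epsilon> * N / \<kappa> - card A) / card E"
    have \<tau>0: "0 \<le> \<tau>" unfolding \<tau>_def using cA kp Epos by (simp add: field_simps)
    have \<tau>1: "\<tau> \<le> 1" unfolding \<tau>_def using big kp Epos by (simp add: field_simps)
    define t where "t i = of_bool (i \<in> A) + \<tau> * of_bool (i \<in> E)" for i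
    have tA: "t i = 1" if "i \<in> A" for i using that AE unfolding t_def by auto
    have "(\<Sum>i<N. t i) = card A + \<tau> * card E"
    proof -
      have "(\<Sum>i<N. t i) = (\<Sum>i<N. of_bool (i \<in> A)) + \<tau> * (\<Sum>i<N. of_bool (i \<in> E))"
        unfolding t_def by (simp add: sum.distrib sum_distrib_left)
      also have "{..<N} \<inter> {i. i \<in> A} = A" "{..<N} \<inter> {i. i \<in> E} = E" unfolding A_def E_def by auto
      ultimately show ?thesis by simp
    qed
    also have "\<dots> = \<epsilon> * N / \<kappa>" unfolding \<tau>_def using Epos by simp
    finally have st: "\<kappa> * (\<Sum>i<N. t i) = \<epsilon> * N" using kp by simp
    have t01: "0 \<le> t i \<and> t i \<le> 1" for i using AE \<tau>0 \<tau>1 unfolding t_def by (auto simp: of_bool_def)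
    show ?thesis
      using bl0 t01 st tA
      by (intro exI[of _ lam0] exI[of _ t]) (auto simp: t_def A_def E_def)
  qed
qed

lemma value_eq:
  fixes L L' t :: "nat \<Rightarrow> real" and b \<kappa> \<epsilon> lam0 :: real and N :: nat
  assumes N: "N > 0"
    and tc: "\<forall>i<N. (L' i - L i > lam0 * \<kappa> \<longrightarrow> t i = 1) \<and> (L' i - L i < lam0 * \<kappa> \<longrightarrow> t i = 0)"
    and alt: "lam0 = b \<or> \<kappa> * (\<Sum>i<N. t i) = \<epsilon> * N"
  shows "(\<Sum>i<N. (1 - t i) * L i + t i * L' i) / N + (\<epsilon> - \<kappa> * (\<Sum>i<N. t i) / N) * b
       = \<epsilon> * lam0 + (1 / real N) * (\<Sum>i<N. max (L i) (L' i - lam0 * \<kappa>))"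
proof -
  have pi: "(1 - t i) * L i + t i * L' i = max (L i) (L' i - lam0 * \<kappa>) + lam0 * \<kappa> * t i" if "i < N" for i
  proof -
    consider "L' i - L i > lam0 * \<kappa>" | "L' i - L i < lam0 * \<kappa>" | "L' i - L i = lam0 * \<kappa>" by linarith
    then show ?thesis
    proof cases
      case 1 then have "t i = 1" using tc that by auto
      then show ?thesis using 1 by (simp add: max_def)
    next
      case 2 then have "t i = 0" using tc that by auto
      then show ?thesis using 2 by (simp add: max_def)
    next
      case 3 then show ?thesis by (simp add: max_def algebra_simps)
    qed
  qed
  have "(\<Sum>i<N. (1 - t i) * L i + t i * L' i) = (\<Sum>i<N. max (L i) (L' i - lam0 * \<kappa>)) + lam0 * \<kappa> * (\<Sum>i<N. t i)"
    using pi by (simp add: sum.distrib sum_distrib_left)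
  then have V: "(\<Sum>i<N. (1 - t i) * L i + t i * L' i) / N = (\<Sum>i<N. max (L i) (L' i - lam0 * \<kappa>)) / N + lam0 * (\<kappa> * (\<Sum>i<N. t i) / N)"
    using N by (simp add: add_divide_distrib)
  from alt show ?thesis
  proof
    assume "lam0 = b" then show ?thesis unfolding V by (simp add: algebra_simps)
  next
    assume "\<kappa> * (\<Sum>i<N. t i) = \<epsilon> * N"
    then have "\<kappa> * (\<Sum>i<N. t i) / N = \<epsilon>" using N by simp
    then show ?thesis unfolding V by (simp add: algebra_simps)
  qed
qed


lemma Kexp_mono:
  assumes "0 \<le> t" "t \<le> 1" "0 \<le> m" "m \<le> 1" "\<And>k. \<phi> k \<le> \<psi> k"
  shows "Kexp t m \<phi> \<le> Kexp t m \<psi>"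
  unfolding Kexp_def using assms by (intro add_mono mult_left_mono) auto

lemma ennreal_split: assumes "0 \<le> (y::real)" shows "ennreal x \<le> ennreal (x - y) + ennreal y"
proof (cases "0 \<le> x - y")
  case True
  have "ennreal (x - y + y) = ennreal (x - y) + ennreal y" using True assms by (rule ennreal_plus)
  then show ?thesis by simp
next
  case False
  then have "ennreal x \<le> ennreal y" by (intro ennreal_leI) simp
  also have "\<dots> \<le> ennreal (x - y) + ennreal y" by simp
  finally show ?thesis .
qed

lemma construction:
  fixes X :: "nat \<Rightarrow> real^'n::finite" and \<beta> :: "real^'n" and t :: "nat \<Rightarrow> real"
  assumes p: "1 \<le> p" and q: "1 \<le> q" and a: "\<alpha> \<ge> 0" and k: "\<kappa> \<ge> 0" and N: "N > 0" and e: "\<epsilon> > 0"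
    and t01: "\<forall>i. 0 \<le> t i \<and> t i \<le> 1" and tsum: "\<kappa> * (\<Sum>i<N. t i) \<le> \<epsilon> * N"
    and d: "\<delta> > 0"
  shows "ennreal ((\<Sum>i<N. (1 - t i) * advloss p \<alpha> \<beta> (X i) (Y i) + t i * advloss p \<alpha> \<beta> (X i) (\<not> Y i)) / N
            + (\<epsilon> - \<kappa> * (\<Sum>i<N. t i) / N) * pnorm (dual_exp q) \<beta>)
         \<le> dr_aro_inner \<epsilon> \<kappa> \<alpha> p q N X Y \<beta> + ennreal \<delta>"
proof -
  define b where "b = pnorm (dual_exp q) \<beta>"
  define V where "V = (\<Sum>i<N. (1 - t i) * advloss p \<alpha> \<beta> (X i) (Y i) + t i * advloss p \<alpha> \<beta> (X i) (\<not> Y i)) / N"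
  define \<rho> where "\<rho> = \<epsilon> - \<kappa> * (\<Sum>i<N. t i) / N"
  obtain u0 where u0: "pnorm q u0 \<le> 1" "\<beta> \<bullet> u0 = b" using attain_pnorm[OF q] unfolding b_def by blast
  define K where "K = (\<Sum>i<N. \<bar>\<beta> \<bullet> X i\<bar>)"
  define Lf where "Lf \<xi> = advloss p \<alpha> \<beta> (fst \<xi>) (snd \<xi>)" for \<xi> :: "(real^'n) \<times> bool"
  have V0: "0 \<le> V" unfolding V_def using t01
    by (intro divide_nonneg_nonneg sum_nonneg add_nonneg_nonneg mult_nonneg_nonneg) (auto intro: less_imp_le[OF advloss_pos])
  have K0: "0 \<le> K" unfolding K_def by (intro sum_nonneg) auto
  define m where "m = min 1 (\<delta> / (V + K + 1))"
  have m0: "0 < m" "m \<le> 1" unfolding m_def using d V0 K0 by auto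
  have mVK: "m * (V + K) \<le> \<delta>"
  proof -
    have "m * (V + K) \<le> m * (V + K + 1)" using m0 by simp
    also have "\<dots> \<le> \<delta> / (V + K + 1) * (V + K + 1)" using V0 K0 unfolding m_def by (intro mult_right_mono) auto
    also have "\<dots> = \<delta>" using V0 K0 by simp
    finally show ?thesis .
  qed
  have \<rho>0: "0 \<le> \<rho>" unfolding \<rho>_def using tsum N by (simp add: divide_le_eq)
  define r where "r = \<rho> / m"
  have r0: "0 \<le> r" unfolding r_def using \<rho>0 m0 by simp
  have mr: "m * r = \<rho>" unfolding r_def using m0 by simp
  define yy where "yy i f = (if f then \<not> Y i else Y i)" for i f
  define tgt where "tgt i fg = (X i + (if snd fg then r else 0) *\<^sub>R ((- lab (yy i (fst fg))) *\<^sub>R u0), yy i (fst fg))" for i fg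
  define G where "G i fg = (tgt i fg, (X i, Y i))" for i fg
  define pc where "pc = pC N G t m"
  define Q where "Q = bmeas (map_pmf fst pc)"
  define C where "C = bmeas pc"
  define P where "P = empirical N X Y"
  have int_pc: "(\<integral>\<^sup>+z. ennreal (h z) \<partial>pc) = ennreal ((\<Sum>i<N. Kexp (t i) m (\<lambda>k. h (G i k))) / real N)"
    if "\<And>z. 0 \<le> h z" for h
    unfolding pc_def using pC_int[OF N, of t m h G] t01 m0 that by auto
  have CQ: "distr C borel fst = Q" unfolding C_def Q_def by (rule distr_bmeas[OF fst_meas_borel])
  have CP: "distr C borel snd = P"
  proof -
    have "map_pmf snd pc = pN N X Y" unfolding pc_def pN_def by (rule pC_snd[OF N]) (simp add: G_def)
    then show ?thesis unfolding C_def P_def empirical_eq[OF N] by (simp add: distr_bmeas[OF snd_meas_borel])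
  qed
  have Cc: "C \<in> couplings Q P" unfolding couplings_def using CQ CP by (simp add: C_def bmeas_prob)
  have dm: "(\<lambda>z::((real^'n)\<times>bool)\<times>((real^'n)\<times>bool). ennreal (xi_dist q \<kappa> (fst z) (snd z))) \<in> borel_measurable borel"
    using measurable_compose[OF xi_meas[of q \<kappa>] measurable_ennreal] by simp
  have xi0: "0 \<le> xi_dist q \<kappa> \<xi> \<xi>'" for \<xi> \<xi>' unfolding xi_dist_def using pnorm_nonneg k by auto
  have costi: "Kexp (t i) m (\<lambda>kk. xi_dist q \<kappa> (fst (G i kk)) (snd (G i kk))) \<le> t i * \<kappa> + m * r" for i
  proof -
    have pw: "xi_dist q \<kappa> (fst (G i kk)) (snd (G i kk)) \<le> \<kappa> * of_bool (fst kk) + r * of_bool (snd kk)" for kk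
    proof -
      define c where "c = (if snd kk then r else 0)"
      have "pnorm q (c *\<^sub>R ((- lab (yy i (fst kk))) *\<^sub>R u0)) \<le> \<bar>c\<bar> * pnorm q ((- lab (yy i (fst kk))) *\<^sub>R u0)"
        by (rule pnorm_scale_le[OF q])
      also have "\<dots> \<le> \<bar>c\<bar> * (\<bar>- lab (yy i (fst kk))\<bar> * pnorm q u0)"
        by (intro mult_left_mono pnorm_scale_le[OF q]) auto
      also have "\<dots> \<le> \<bar>c\<bar>" using u0 by (simp add: lab_abs mult_left_le)
      also have "\<bar>c\<bar> = r * of_bool (snd kk)" unfolding c_def using r0 by auto
      finally have "pnorm q (c *\<^sub>R ((- lab (yy i (fst kk))) *\<^sub>R u0)) \<le> r * of_bool (snd kk)" .
      moreover have "(if yy i (fst kk) \<noteq> Y i then 1 else 0) = (of_bool (fst kk) :: real)" unfolding yy_def by auto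
      ultimately show ?thesis unfolding G_def tgt_def xi_dist_def c_def by simp
    qed
    have "Kexp (t i) m (\<lambda>kk. xi_dist q \<kappa> (fst (G i kk)) (snd (G i kk))) \<le> Kexp (t i) m (\<lambda>kk. \<kappa> * of_bool (fst kk) + r * of_bool (snd kk))"
      using t01 m0 pw by (intro Kexp_mono) auto
    also have "\<dots> = t i * \<kappa> + m * r" unfolding Kexp_def by (simp add: algebra_simps)
    finally show ?thesis .
  qed
  have "wass q \<kappa> Q P \<le> (\<integral>\<^sup>+z. ennreal (xi_dist q \<kappa> (fst z) (snd z)) \<partial>C)"
    unfolding wass_def by (rule INF_lower[OF Cc])
  also have "\<dots> = (\<integral>\<^sup>+z. ennreal (xi_dist q \<kappa> (fst z) (snd z)) \<partial>pc)"
    unfolding C_def by (rule nn_integral_bmeas[OF dm])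
  also have "\<dots> = ennreal ((\<Sum>i<N. Kexp (t i) m (\<lambda>kk. xi_dist q \<kappa> (fst (G i kk)) (snd (G i kk)))) / real N)"
    by (rule int_pc) (rule xi0)
  also have "\<dots> \<le> ennreal \<epsilon>"
  proof (rule ennreal_leI)
    have "(\<Sum>i<N. Kexp (t i) m (\<lambda>kk. xi_dist q \<kappa> (fst (G i kk)) (snd (G i kk)))) \<le> (\<Sum>i<N. t i * \<kappa> + m * r)"
      by (intro sum_mono costi)
    also have "\<dots> = \<kappa> * (\<Sum>i<N. t i) + N * \<rho>" by (simp add: sum.distrib sum_distrib_left[symmetric] mr mult.commute)
    finally have "(\<Sum>i<N. Kexp (t i) m (\<lambda>kk. xi_dist q \<kappa> (fst (G i kk)) (snd (G i kk)))) / N \<le> (\<kappa> * (\<Sum>i<N. t i) + N * \<rho>) / N"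
      using N by (simp add: divide_right_mono)
    also have "\<dots> = \<epsilon>" unfolding \<rho>_def using N by (simp add: field_simps)
    finally show "(\<Sum>i<N. Kexp (t i) m (\<lambda>kk. xi_dist q \<kappa> (fst (G i kk)) (snd (G i kk)))) / N \<le> \<epsilon>" .
  qed
  finally have W: "wass q \<kappa> Q P \<le> ennreal \<epsilon>" .
  have fm: "(\<integral>\<^sup>+\<xi>. ennreal (xi_dist q \<kappa> \<xi> (0, True)) \<partial>Q) < \<infinity>"
  proof -
    have pm: "(\<lambda>\<xi>::(real^'n)\<times>bool. (\<xi>, (0::real^'n, True))) \<in> borel_measurable borel"
      by (rule borel_measurable_continuous_onI) (intro continuous_intros)
    have m1: "(\<lambda>\<xi>::(real^'n)\<times>bool. ennreal (xi_dist q \<kappa> \<xi> (0, True))) \<in> borel_measurable borel"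
      using measurable_compose[OF pm dm] by simp
    have "(\<integral>\<^sup>+\<xi>. ennreal (xi_dist q \<kappa> \<xi> (0, True)) \<partial>Q) = (\<integral>\<^sup>+z. ennreal (xi_dist q \<kappa> (fst z) (0, True)) \<partial>pc)"
      unfolding Q_def by (simp add: nn_integral_bmeas[OF m1])
    also have "\<dots> = ennreal ((\<Sum>i<N. Kexp (t i) m (\<lambda>kk. xi_dist q \<kappa> (fst (G i kk)) (0, True))) / real N)"
      by (rule int_pc) (rule xi0)
    finally show ?thesis by simp
  qed
  have Qball: "Q \<in> wball q \<kappa> \<epsilon> P"
    unfolding wball_def prob_Xi_def using W fm by (simp add: Q_def bmeas_prob)
  have Lm: "(\<lambda>\<xi>::(real^'n)\<times>bool. ennreal (Lf \<xi>)) \<in> borel_measurable borel"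
    unfolding Lf_def using measurable_compose[OF L_meas[of p \<alpha> \<beta>] measurable_ennreal] by simp
  have Lf0: "0 \<le> Lf \<xi>" for \<xi> unfolding Lf_def using advloss_pos by (rule less_imp_le)
  have lossi: "m * (r * b - K) + (1 - m) * ((1 - t i) * Lf (X i, Y i) + t i * Lf (X i, \<not> Y i))
       \<le> Kexp (t i) m (\<lambda>kk. Lf (fst (G i kk)))" if i: "i < N" for i
  proof -
    define \<psi> where "\<psi> kk = (if snd kk then r * b - K else Lf (X i, yy i (fst kk)))" for kk
    have pw: "\<psi> kk \<le> Lf (fst (G i kk))" for kk
    proof (cases "snd kk")
      case False then show ?thesis unfolding \<psi>_def G_def tgt_def by simp
    next
      case True
      define y' where "y' = yy i (fst kk)"
      have bi: "\<bar>\<beta> \<bullet> X i\<bar> \<le> K" unfolding K_def using i by (intro member_le_sum) auto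
      have "- lab y' * (\<beta> \<bullet> (X i + r *\<^sub>R ((- lab y') *\<^sub>R u0))) = - lab y' * (\<beta> \<bullet> X i) + r * (lab y' * lab y') * b"
        using u0 by (simp add: inner_add_right algebra_simps)
      then have eq: "Lf (fst (G i kk)) = sp (- lab y' * (\<beta> \<bullet> X i) + r * b + \<alpha> * pnorm (dual_exp p) \<beta>)"
        unfolding Lf_def G_def tgt_def y'_def[symmetric] using True by (simp add: advloss_sp lab_sq)
      have "r * b - K \<le> - lab y' * (\<beta> \<bullet> X i) + r * b + \<alpha> * pnorm (dual_exp p) \<beta>"
        using bi a pnorm_nonneg[of "dual_exp p" \<beta>] by (simp add: lab_def abs_le_iff split: if_splits) (smt (verit) mult_nonneg_nonneg)
      also have "\<dots> \<le> Lf (fst (G i kk))" unfolding eq by (rule sp_ge)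
      finally show ?thesis unfolding \<psi>_def using True by simp
    qed
    have "Kexp (t i) m \<psi> \<le> Kexp (t i) m (\<lambda>kk. Lf (fst (G i kk)))" using t01 m0 pw by (intro Kexp_mono) auto
    moreover have "Kexp (t i) m \<psi> = m * (r * b - K) + (1 - m) * ((1 - t i) * Lf (X i, Y i) + t i * Lf (X i, \<not> Y i))"
      unfolding Kexp_def \<psi>_def yy_def by (simp add: algebra_simps)
    ultimately show ?thesis by simp
  qed
  have Eq: "(\<integral>\<^sup>+\<xi>. worst_loss p \<alpha> \<beta> \<xi> \<partial>Q) = ennreal ((\<Sum>i<N. Kexp (t i) m (\<lambda>kk. Lf (fst (G i kk)))) / real N)"
  proof -
    have "(\<integral>\<^sup>+\<xi>. worst_loss p \<alpha> \<beta> \<xi> \<partial>Q) = (\<integral>\<^sup>+\<xi>. ennreal (Lf \<xi>) \<partial>Q)"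
      unfolding Lf_def by (simp add: worst_loss_eq[OF p a])
    also have "\<dots> = (\<integral>\<^sup>+z. ennreal (Lf (fst z)) \<partial>pc)" unfolding Q_def by (simp add: nn_integral_bmeas[OF Lm])
    also have "\<dots> = ennreal ((\<Sum>i<N. Kexp (t i) m (\<lambda>kk. Lf (fst (G i kk)))) / real N)"
      by (rule int_pc) (rule Lf0)
    finally show ?thesis .
  qed
  have low: "V + \<rho> * b - m * (V + K) \<le> (\<Sum>i<N. Kexp (t i) m (\<lambda>kk. Lf (fst (G i kk)))) / real N"
  proof -
    have "(\<Sum>i<N. m * (r * b - K) + (1 - m) * ((1 - t i) * Lf (X i, Y i) + t i * Lf (X i, \<not> Y i)))
          \<le> (\<Sum>i<N. Kexp (t i) m (\<lambda>kk. Lf (fst (G i kk))))"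
      using lossi by (intro sum_mono) auto
    note S1 = this
    have "(\<Sum>i<N. m * (r * b - K) + (1 - m) * ((1 - t i) * Lf (X i, Y i) + t i * Lf (X i, \<not> Y i))) / N
         = m * (r * b - K) + (1 - m) * V"
    proof -
      define w where "w i = (1 - t i) * Lf (X i, Y i) + t i * Lf (X i, \<not> Y i)" for i
      have Vw: "V = (\<Sum>i<N. w i) / N" unfolding V_def w_def Lf_def by simp
      have "(\<Sum>i<N. m * (r * b - K) + (1 - m) * w i) = N * (m * (r * b - K)) + (1 - m) * (\<Sum>i<N. w i)"
        by (simp add: sum.distrib sum_distrib_left)
      then have "(\<Sum>i<N. m * (r * b - K) + (1 - m) * w i) / N = m * (r * b - K) + (1 - m) * ((\<Sum>i<N. w i) / N)"
        using N by (simp add: add_divide_distrib)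
      then show ?thesis unfolding Vw w_def .
    qed
    note S2 = this
    have "m * (r * b - K) + (1 - m) * V \<le> (\<Sum>i<N. Kexp (t i) m (\<lambda>kk. Lf (fst (G i kk)))) / real N"
      using divide_right_mono[OF S1, of "real N"] S2 by simp
    moreover have "m * (r * b - K) + (1 - m) * V = V + \<rho> * b - m * (V + K)"
      using mr by (simp add: algebra_simps)
    ultimately show ?thesis by simp
  qed
  have "ennreal (V + \<rho> * b) \<le> ennreal (V + \<rho> * b - m * (V + K)) + ennreal (m * (V + K))"
    using m0 V0 K0 by (intro ennreal_split) simp
  also have "\<dots> \<le> (\<integral>\<^sup>+\<xi>. worst_loss p \<alpha> \<beta> \<xi> \<partial>Q) + ennreal \<delta>"
    unfolding Eq using low mVK by (intro add_mono ennreal_leI)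
  also have "\<dots> \<le> dr_aro_inner \<epsilon> \<kappa> \<alpha> p q N X Y \<beta> + ennreal \<delta>"
    unfolding dr_aro_inner_def using Qball unfolding P_def by (intro add_right_mono SUP_upper)
  finally show ?thesis unfolding V_def \<rho>_def b_def .
qed


lemma inner_eq:
  fixes \<epsilon> \<kappa> \<alpha> :: real and p q :: ereal and N :: nat
    and X :: "nat \<Rightarrow> real ^ 'n::finite" and Y :: "nat \<Rightarrow> bool"
  assumes e: "\<epsilon> > 0" and k: "\<kappa> \<ge> 0" and a: "\<alpha> \<ge> 0"
    and p: "1 \<le> p" and q: "1 \<le> q" and N: "N > 0"
  shows "dr_aro_inner \<epsilon> \<kappa> \<alpha> p q N X Y \<beta> =
           (INF (lam, s) \<in> {(lam, s). prog_feasible \<kappa> \<alpha> p q N X Y \<beta> lam s}.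
              ennreal (prog_obj \<epsilon> N lam s))"
proof (rule antisym)
  show "dr_aro_inner \<epsilon> \<kappa> \<alpha> p q N X Y \<beta> \<le> (INF (lam, s) \<in> {(lam, s). prog_feasible \<kappa> \<alpha> p q N X Y \<beta> lam s}.
              ennreal (prog_obj \<epsilon> N lam s))"
  proof (rule INF_greatest, clarify)
    fix lam s assume F: "prog_feasible \<kappa> \<alpha> p q N X Y \<beta> lam s"
    show "dr_aro_inner \<epsilon> \<kappa> \<alpha> p q N X Y \<beta> \<le> ennreal (prog_obj \<epsilon> N lam s)"
      unfolding dr_aro_inner_def using upper_bound[OF p q a k N e _ F] by (intro SUP_least) auto
  qed
next
  define L where "L i = advloss p \<alpha> \<beta> (X i) (Y i)" for i
  define L' where "L' i = advloss p \<alpha> \<beta> (X i) (\<not> Y i)" for i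
  define b where "b = pnorm (dual_exp q) \<beta>"
  obtain lam0 t where sel: "b \<le> lam0" "\<forall>i. 0 \<le> t i \<and> t i \<le> 1"
     "\<forall>i<N. (L' i - L i > lam0 * \<kappa> \<longrightarrow> t i = 1) \<and> (L' i - L i < lam0 * \<kappa> \<longrightarrow> t i = 0)"
     "\<kappa> * (\<Sum>i<N. t i) \<le> \<epsilon> * N" "lam0 = b \<or> \<kappa> * (\<Sum>i<N. t i) = \<epsilon> * N"
    using lp_select[OF k e N, of b "\<lambda>i. L' i - L i"] by blast
  define s0 where "s0 i = max (L i) (L' i - lam0 * \<kappa>)" for i
  have b0: "0 \<le> b" unfolding b_def by (rule pnorm_nonneg)
  have F: "prog_feasible \<kappa> \<alpha> p q N X Y \<beta> lam0 s0"
    unfolding prog_feasible_def s0_def L_def L'_def using sel(1) b0 advloss_pos[of p \<alpha> \<beta>]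
    by (auto simp: b_def le_max_iff_disj less_imp_le[OF advloss_pos])
  have val: "prog_obj \<epsilon> N lam0 s0 = (\<Sum>i<N. (1 - t i) * L i + t i * L' i) / N + (\<epsilon> - \<kappa> * (\<Sum>i<N. t i) / N) * b"
    unfolding prog_obj_def s0_def using value_eq[OF N sel(3) sel(5)] by simp
  have "(INF (lam, s) \<in> {(lam, s). prog_feasible \<kappa> \<alpha> p q N X Y \<beta> lam s}. ennreal (prog_obj \<epsilon> N lam s))
        \<le> ennreal (prog_obj \<epsilon> N lam0 s0)"
    using F by (intro INF_lower2[of "(lam0, s0)"]) auto
  also have "\<dots> \<le> dr_aro_inner \<epsilon> \<kappa> \<alpha> p q N X Y \<beta>"
  proof (rule ennreal_le_epsilon)
    fix \<delta> :: real assume "0 < \<delta>"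
    from construction[OF p q a k N e sel(2) sel(4) this, of \<beta> X Y]
    show "ennreal (prog_obj \<epsilon> N lam0 s0) \<le> dr_aro_inner \<epsilon> \<kappa> \<alpha> p q N X Y \<beta> + ennreal \<delta>"
      unfolding val L_def L'_def b_def .
  qed
  finally show "(INF (lam, s) \<in> {(lam, s). prog_feasible \<kappa> \<alpha> p q N X Y \<beta> lam s}. ennreal (prog_obj \<epsilon> N lam s))
        \<le> dr_aro_inner \<epsilon> \<kappa> \<alpha> p q N X Y \<beta>" .
qed

theorem corollary1:
  fixes \<epsilon> \<kappa> \<alpha> :: real and p q :: ereal and N :: nat
    and X :: "nat \<Rightarrow> real ^ 'n::finite" and Y :: "nat \<Rightarrow> bool"
  assumes "\<epsilon> > 0" and "\<kappa> \<ge> 0" and "\<alpha> \<ge> 0"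
    and "1 \<le> p" and "1 \<le> q" and "N > 0"
  shows "(INF \<beta>. dr_aro_inner \<epsilon> \<kappa> \<alpha> p q N X Y \<beta>) =
           (INF (\<beta>, lam, s) \<in> {(\<beta>, lam, s). prog_feasible \<kappa> \<alpha> p q N X Y \<beta> lam s}.
              ennreal (prog_obj \<epsilon> N lam s))
    \<and> (\<forall>\<beta>. dr_aro_inner \<epsilon> \<kappa> \<alpha> p q N X Y \<beta> =
           (INF (lam, s) \<in> {(lam, s). prog_feasible \<kappa> \<alpha> p q N X Y \<beta> lam s}.
              ennreal (prog_obj \<epsilon> N lam s)))"
proof -
  have I: "\<And>\<beta>. dr_aro_inner \<epsilon> \<kappa> \<alpha> p q N X Y \<beta> =
           (INF (lam, s) \<in> {(lam, s). prog_feasible \<kappa> \<alpha> p q N X Y \<beta> lam s}.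
              ennreal (prog_obj \<epsilon> N lam s))"
    using inner_eq[OF assms] by blast
  have "(INF \<beta>. dr_aro_inner \<epsilon> \<kappa> \<alpha> p q N X Y \<beta>) =
           (INF (\<beta>, lam, s) \<in> {(\<beta>, lam, s). prog_feasible \<kappa> \<alpha> p q N X Y \<beta> lam s}.
              ennreal (prog_obj \<epsilon> N lam s))"
    unfolding I
  proof (rule antisym)
    show "(INF \<beta>. INF (lam, s) \<in> {(lam, s). prog_feasible \<kappa> \<alpha> p q N X Y \<beta> lam s}. ennreal (prog_obj \<epsilon> N lam s))
      \<le> (INF (\<beta>, lam, s) \<in> {(\<beta>, lam, s). prog_feasible \<kappa> \<alpha> p q N X Y \<beta> lam s}. ennreal (prog_obj \<epsilon> N lam s))"
    proof (rule INF_greatest, clarify)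
      fix \<beta> lam s assume "prog_feasible \<kappa> \<alpha> p q N X Y \<beta> lam s"
      then show "(INF \<beta>. INF (lam, s) \<in> {(lam, s). prog_feasible \<kappa> \<alpha> p q N X Y \<beta> lam s}. ennreal (prog_obj \<epsilon> N lam s))
          \<le> ennreal (prog_obj \<epsilon> N lam s)"
        by (intro INF_lower2[of \<beta>] INF_lower2[of "(lam, s)"]) auto
    qed
    show "(INF (\<beta>, lam, s) \<in> {(\<beta>, lam, s). prog_feasible \<kappa> \<alpha> p q N X Y \<beta> lam s}. ennreal (prog_obj \<epsilon> N lam s))
      \<le> (INF \<beta>. INF (lam, s) \<in> {(lam, s). prog_feasible \<kappa> \<alpha> p q N X Y \<beta> lam s}. ennreal (prog_obj \<epsilon> N lam s))"
    proof (rule INF_greatest, rule INF_greatest, clarify)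
      fix \<beta> lam s assume "prog_feasible \<kappa> \<alpha> p q N X Y \<beta> lam s"
      then show "(INF (\<beta>, lam, s) \<in> {(\<beta>, lam, s). prog_feasible \<kappa> \<alpha> p q N X Y \<beta> lam s}. ennreal (prog_obj \<epsilon> N lam s))
          \<le> ennreal (prog_obj \<epsilon> N lam s)"
        by (intro INF_lower2[of "(\<beta>, lam, s)"]) auto
    qed
  qed
  with I show ?thesis by blast
qed


end
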